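(* Consider the discrete setting described in the context, with constants $0<\gamma_1<\rho_\infty^*$, $\gamma_2>0$, and assume $\lambda=\Delta x/(2\Delta t)\ge v^*/2$. If $(\mathfrak f^n_{ij},\mathfrak g^n_{ij})_{i,j}$ satisfies, for all $i\in\mathcal I$, $j\in\mathcal J$, $$(\rho_\infty^*-\gamma_1)\chi_{1,j}\le\mathfrak f^n_{ij}\le(\rho_\infty^*+\gamma_2)\chi_{1,j},\qquad(\rho_\infty^*+\gamma_2)^{-1}\chi_{2,j}\le\mathfrak g^n_{ij}\le(\rho_\infty^*-\gamma_1)^{-1}\chi_{2,j},$$ then any solution $(\mathfrak f^{n+1}_{ij},\mathfrak g^{n+1}_{ij})_{i,j}$ of the truncated scheme $$\frac{\mathfrak f^{n+1}_{ij}-\mathfrak f^n_{ij}}{\Delta t}+\frac{1}{\Delta x\Delta v}\big(\mathcal F^{n+1}_{i+\frac12,j}-\mathcal F^{n+1}_{i-\frac12,j}\big)=\chi_{1,j}-\tilde\rho^{n+1}_{\mathfrak g,i}\tilde{\mathfrak f}^{n+1}_{ij},\quad \frac{\mathfrak g^{n+1}_{ij}-\mathfrak g^n_{ij}}{\Delta t}+\frac{1}{\Delta x\Delta v}\big(\mathcal G^{n+1}_{i+\frac12,j}-\mathcal G^{n+1}_{i-\frac12,j}\big)=\chi_{2,j}-\tilde\rho^{n+1}_{\mathfrak f,i}\tilde{\mathfrak g}^{n+1}_{ij}$$ satisfies the same bounds (with $n$ replaced by $n+1$) for all $i\in\mathcal I$, $j\in\mathcal J$.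
   Context: Space mesh: $N$ uniform cells of length $\Delta x$, $i\in\mathcal I=\mathbb Z/N\mathbb Z$ (periodic). Velocity mesh: $v^*>0$, $\Delta v=v^*/L$, $j\in\mathcal J=\{-L+1,\dots,L\}$, $v_j=(j-\tfrac12)\Delta v$. Time step $\Delta t>0$; $\lambda=\Delta x/(2\Delta t)$. $\rho_\infty^*>0$ a given constant. For $k=1,2$: $\chi_{k,j}>0$, $\chi_{k,j}=\chi_{k,1-j}$, $\sum_j\Delta v\chi_{k,j}=1$. Fluxes: $\mathcal F^{n+1}_{i+\frac12,j}=\Delta v\frac{v_j}{2}(\mathfrak f^{n+1}_{i+1,j}+\mathfrak f^{n+1}_{ij})-\Delta v\lambda(\mathfrak f^{n+1}_{i+1,j}-\mathfrak f^{n+1}_{ij})$, $\mathcal G$ likewise with $\mathfrak g$. Truncations: $\tilde{\mathfrak f}_{ij}=\min\big(\max(\mathfrak f_{ij},(\rho_\infty^*-\gamma_1)\chi_{1,j}),(\rho_\infty^*+\gamma_2)\chi_{1,j}\big)$, $\tilde{\mathfrak g}_{ij}=\min\big(\max(\mathfrak g_{ij},(\rho_\infty^*+\gamma_2)^{-1}\chi_{2,j}),(\rho_\infty^*-\gamma_1)^{-1}\chi_{2,j}\big)$; $\tilde\rho_{\mathfrak f,i}=\sum_j\Delta v\,\tilde{\mathfrak f}_{ij}$, $\tilde\rho_{\mathfrak g,i}=\sum_j\Delta v\,\tilde{\mathfrak g}_{ij}$. *)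

theory Defs
  imports Complex_Main
begin

text \<open>Space cells i in {0..<N} (periodic, i.e. Z/NZ represented by residues mod N);
velocity indices j in {-L+1..L}; v_j = (j - 1/2) dv with dv = vstar / L.\<close>

definition Jset :: "nat \<Rightarrow> int set" where
  "Jset L = {-(int L) + 1 .. int L}"

definition vel :: "real \<Rightarrow> nat \<Rightarrow> int \<Rightarrow> real" where
  "vel vstar L j = (real_of_int j - 1/2) * (vstar / real L)"

definition nxt :: "nat \<Rightarrow> nat \<Rightarrow> nat" where
  "nxt N i = (i + 1) mod N"

definition prv :: "nat \<Rightarrow> nat \<Rightarrow> nat" where
  "prv N i = (i + N - 1) mod N"

definition flux :: "nat \<Rightarrow> real \<Rightarrow> nat \<Rightarrow> real \<Rightarrow> real \<Rightarrow> (nat \<Rightarrow> int \<Rightarrow> real) \<Rightarrow> nat \<Rightarrow> int \<Rightarrow> real" where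
  "flux N vstar L dx dt h i j =
     (vstar / real L) * (vel vstar L j / 2) * (h (nxt N i) j + h i j)
     - (vstar / real L) * (dx / (2 * dt)) * (h (nxt N i) j - h i j)"

definition trunc :: "real \<Rightarrow> real \<Rightarrow> real \<Rightarrow> real" where
  "trunc lo hi x = min (max x lo) hi"

definition ftil :: "real \<Rightarrow> real \<Rightarrow> real \<Rightarrow> (int \<Rightarrow> real) \<Rightarrow> (nat \<Rightarrow> int \<Rightarrow> real) \<Rightarrow> nat \<Rightarrow> int \<Rightarrow> real" where
  "ftil rho g1 g2 chi1 f i j = trunc ((rho - g1) * chi1 j) ((rho + g2) * chi1 j) (f i j)"

definition gtil :: "real \<Rightarrow> real \<Rightarrow> real \<Rightarrow> (int \<Rightarrow> real) \<Rightarrow> (nat \<Rightarrow> int \<Rightarrow> real) \<Rightarrow> nat \<Rightarrow> int \<Rightarrow> real" where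
  "gtil rho g1 g2 chi2 g i j = trunc (inverse (rho + g2) * chi2 j) (inverse (rho - g1) * chi2 j) (g i j)"

definition rhotil :: "real \<Rightarrow> nat \<Rightarrow> (nat \<Rightarrow> int \<Rightarrow> real) \<Rightarrow> nat \<Rightarrow> real" where
  "rhotil vstar L ht i = (\<Sum>j\<in>Jset L. (vstar / real L) * ht i j)"

end

theory Submission
  imports Defs
begin

lemma upper_gen:
  fixes h h0 D R :: "nat \<Rightarrow> real"
  assumes N: "N \<ge> 1" and dt: "dt > 0"
    and eq: "\<And>i. i < N \<Longrightarrow> (h i - h0 i) / dt + D i = R i"
    and Dm: "\<And>i. i < N \<Longrightarrow> (\<forall>k<N. h k \<le> h i) \<Longrightarrow> D i \<ge> 0"
    and h0: "\<And>i. i < N \<Longrightarrow> h0 i \<le> U"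
    and Rn: "\<And>i. i < N \<Longrightarrow> h i > U \<Longrightarrow> R i \<le> 0"
  shows "\<forall>i<N. h i \<le> U"
proof (rule ccontr)
  assume "\<not> (\<forall>i<N. h i \<le> U)"
  then obtain i where i: "i < N" "h i > U" by auto
  define m where "m = Max (h ` {..<N})"
  have "0 \<in> {..<N}" using N by simp
  hence fin: "finite (h ` {..<N})" "h ` {..<N} \<noteq> {}" by auto
  have "m \<in> h ` {..<N}" unfolding m_def using fin by (rule Max_in)
  then obtain i0 where i0: "i0 < N" "h i0 = m" by auto
  have mx: "\<forall>k<N. h k \<le> h i0" using i0 fin unfolding m_def by auto
  have "h i0 > U" using mx i by force
  hence "R i0 \<le> 0" using Rn i0 by auto
  moreover have "D i0 \<ge> 0" using Dm i0 mx by auto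
  moreover have "(h i0 - h0 i0) / dt > 0" using h0[OF i0(1)] \<open>h i0 > U\<close> dt by auto
  ultimately show False using eq[OF i0(1)] by linarith
qed

lemma lower_gen:
  fixes h h0 D R :: "nat \<Rightarrow> real"
  assumes N: "N \<ge> 1" and dt: "dt > 0"
    and eq: "\<And>i. i < N \<Longrightarrow> (h i - h0 i) / dt + D i = R i"
    and Dm: "\<And>i. i < N \<Longrightarrow> (\<forall>k<N. h i \<le> h k) \<Longrightarrow> D i \<le> 0"
    and h0: "\<And>i. i < N \<Longrightarrow> Lo \<le> h0 i"
    and Rn: "\<And>i. i < N \<Longrightarrow> h i < Lo \<Longrightarrow> R i \<ge> 0"
  shows "\<forall>i<N. Lo \<le> h i"
proof -
  have "\<forall>i<N. - h i \<le> - Lo"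
  proof (rule upper_gen[where h="\<lambda>i. - h i" and U="- Lo" and h0="\<lambda>i. - h0 i" and D="\<lambda>i. - D i" and R="\<lambda>i. - R i", OF N dt])
    fix i assume i: "i < N"
    have "(- h i - - h0 i) / dt = - ((h i - h0 i) / dt)" by (simp add: diff_divide_distrib)
    thus "(- h i - - h0 i) / dt + - D i = - R i" using eq[OF i] by linarith
  next
    fix i assume "i < N" "\<forall>k<N. - h k \<le> - h i" thus "0 \<le> - D i" using Dm by auto
  next
    fix i assume "i < N" thus "- h0 i \<le> - Lo" using h0 by auto
  next
    fix i assume "i < N" "- Lo < - h i" thus "- R i \<le> 0" using Rn by auto
  qed
  thus ?thesis by auto
qed

lemma nxt_prv: "N \<ge> 1 \<Longrightarrow> i < N \<Longrightarrow> nxt N (prv N i) = i"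
  unfolding nxt_def prv_def
  by (metis Suc_leI add_Suc_right add_diff_cancel_left' mod_Suc_eq mod_add_self2 mod_less plus_1_eq_Suc Suc_diff_le le_add2 add.commute)

lemma nxt_lt: "N \<ge> 1 \<Longrightarrow> nxt N i < N" unfolding nxt_def by auto
lemma prv_lt: "N \<ge> 1 \<Longrightarrow> prv N i < N" unfolding prv_def by auto

lemma vel_bound:
  assumes "L \<ge> 1" "vstar > 0" "j \<in> Jset L"
  shows "\<bar>vel vstar L j\<bar> \<le> vstar"
proof -
  have j: "- int L + 1 \<le> j" "j \<le> int L" using assms(3) unfolding Jset_def by auto
  have a: "\<bar>real_of_int j - 1/2\<bar> \<le> real L" using j by linarith
  have "\<bar>vel vstar L j\<bar> = \<bar>real_of_int j - 1/2\<bar> * (vstar / real L)"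
    unfolding vel_def using assms by (simp add: abs_mult)
  also have "\<dots> \<le> real L * (vstar / real L)"
    using a assms by (intro mult_right_mono) auto
  also have "\<dots> = vstar" using assms by simp
  finally show ?thesis .
qed

lemma flux_diff:
  assumes N: "N \<ge> 1" and i: "i < N"
  shows "flux N vstar L dx dt h i j - flux N vstar L dx dt h (prv N i) j =
    (vstar / real L) * ((vel vstar L j / 2 - dx / (2 * dt)) * (h (nxt N i) j - h i j)
       + (vel vstar L j / 2 + dx / (2 * dt)) * (h i j - h (prv N i) j))"
proof -
  have e: "\<And>a w lam x y z :: real. a*w*(x+y) - a*lam*(x-y) - (a*w*(y+z) - a*lam*(y-z))
     = a*((w-lam)*(x-y) + (w+lam)*(y-z))" by (simp add: algebra_simps)
  show ?thesis unfolding flux_def nxt_prv[OF N i] by (rule e)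
qed

lemma flux_max:
  assumes N: "N \<ge> 1" and i: "i < N" and L: "L \<ge> 1" and vs: "vstar > 0"
    and j: "j \<in> Jset L" and CFL: "dx / (2 * dt) \<ge> vstar / 2"
    and mx: "\<forall>k<N. h k j \<le> h i j"
  shows "flux N vstar L dx dt h i j - flux N vstar L dx dt h (prv N i) j \<ge> 0"
proof -
  have v: "\<bar>vel vstar L j\<bar> \<le> vstar" using vel_bound L vs j by auto
  have a: "h (nxt N i) j - h i j \<le> 0" using mx nxt_lt[OF N] by auto
  have b: "h i j - h (prv N i) j \<ge> 0" using mx prv_lt[OF N] by auto
  have c1: "vel vstar L j / 2 - dx / (2 * dt) \<le> 0" using v CFL by linarith
  have c2: "vel vstar L j / 2 + dx / (2 * dt) \<ge> 0" using v CFL by linarith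
  have "(vel vstar L j / 2 - dx / (2 * dt)) * (h (nxt N i) j - h i j) \<ge> 0"
    using a c1 by (simp add: mult_nonpos_nonpos)
  moreover have "(vel vstar L j / 2 + dx / (2 * dt)) * (h i j - h (prv N i) j) \<ge> 0"
    using b c2 by simp
  ultimately have s: "0 \<le> (vel vstar L j / 2 - dx / (2 * dt)) * (h (nxt N i) j - h i j)
       + (vel vstar L j / 2 + dx / (2 * dt)) * (h i j - h (prv N i) j)" by (rule add_nonneg_nonneg)
  have "vstar / real L \<ge> 0" using vs by simp
  from mult_nonneg_nonneg[OF this s] show ?thesis unfolding flux_diff[OF N i] .
qed

lemma flux_min:
  assumes N: "N \<ge> 1" and i: "i < N" and L: "L \<ge> 1" and vs: "vstar > 0"
    and j: "j \<in> Jset L" and CFL: "dx / (2 * dt) \<ge> vstar / 2"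
    and mx: "\<forall>k<N. h i j \<le> h k j"
  shows "flux N vstar L dx dt h i j - flux N vstar L dx dt h (prv N i) j \<le> 0"
proof -
  have v: "\<bar>vel vstar L j\<bar> \<le> vstar" using vel_bound L vs j by auto
  have a: "h (nxt N i) j - h i j \<ge> 0" using mx nxt_lt[OF N] by auto
  have b: "h i j - h (prv N i) j \<le> 0" using mx prv_lt[OF N] by auto
  have c1: "vel vstar L j / 2 - dx / (2 * dt) \<le> 0" using v CFL by linarith
  have c2: "vel vstar L j / 2 + dx / (2 * dt) \<ge> 0" using v CFL by linarith
  have "(vel vstar L j / 2 - dx / (2 * dt)) * (h (nxt N i) j - h i j) \<le> 0"
    using a c1 by (simp add: mult_nonpos_nonneg)
  moreover have "(vel vstar L j / 2 + dx / (2 * dt)) * (h i j - h (prv N i) j) \<le> 0"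
    using b c2 by (simp add: mult_nonneg_nonpos)
  ultimately have s: "(vel vstar L j / 2 - dx / (2 * dt)) * (h (nxt N i) j - h i j)
       + (vel vstar L j / 2 + dx / (2 * dt)) * (h i j - h (prv N i) j) \<le> 0" by (rule add_nonpos_nonpos)
  have "vstar / real L \<ge> 0" using vs by simp
  from mult_nonneg_nonpos[OF this s] show ?thesis unfolding flux_diff[OF N i] .
qed

lemma trunc_ge: "lo \<le> hi \<Longrightarrow> lo \<le> trunc lo hi x" unfolding trunc_def by auto
lemma trunc_le: "trunc lo hi x \<le> hi" unfolding trunc_def by auto
lemma trunc_hi: "lo \<le> hi \<Longrightarrow> x > hi \<Longrightarrow> trunc lo hi x = hi" unfolding trunc_def by auto
lemma trunc_lo: "lo \<le> hi \<Longrightarrow> x < lo \<Longrightarrow> trunc lo hi x = lo" unfolding trunc_def by auto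

lemma rhotil_ge:
  assumes "\<And>j. j \<in> Jset L \<Longrightarrow> c * chi j \<le> ht i j" "vstar > 0"
    and "(\<Sum>j\<in>Jset L. (vstar / real L) * chi j) = 1"
  shows "c \<le> rhotil vstar L ht i"
proof -
  have "c = (\<Sum>j\<in>Jset L. (vstar / real L) * (c * chi j))"
  proof -
    have "c * (\<Sum>j\<in>Jset L. (vstar / real L) * chi j) = (\<Sum>j\<in>Jset L. (vstar / real L) * (c * chi j))"
      unfolding sum_distrib_left by (simp add: ac_simps)
    thus ?thesis using assms(3) by simp
  qed
  also have "\<dots> \<le> rhotil vstar L ht i" unfolding rhotil_def
    using assms(1,2) by (intro sum_mono mult_left_mono) auto
  finally show ?thesis .
qed

lemma rhotil_le:
  assumes "\<And>j. j \<in> Jset L \<Longrightarrow> ht i j \<le> c * chi j" "vstar > 0"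
    and "(\<Sum>j\<in>Jset L. (vstar / real L) * chi j) = 1"
  shows "rhotil vstar L ht i \<le> c"
proof -
  have "c = (\<Sum>j\<in>Jset L. (vstar / real L) * (c * chi j))"
  proof -
    have "c * (\<Sum>j\<in>Jset L. (vstar / real L) * chi j) = (\<Sum>j\<in>Jset L. (vstar / real L) * (c * chi j))"
      unfolding sum_distrib_left by (simp add: ac_simps)
    thus ?thesis using assms(3) by simp
  qed
  moreover have "rhotil vstar L ht i \<le> (\<Sum>j\<in>Jset L. (vstar / real L) * (c * chi j))" unfolding rhotil_def
    using assms(1,2) by (intro sum_mono mult_left_mono) auto
  ultimately show ?thesis by simp
qed

theorem lemma5p5:
  fixes N L :: nat and dx dt vstar rho g1 g2 :: real
    and chi1 chi2 :: "int \<Rightarrow> real"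
    and f0 g0 f g :: "nat \<Rightarrow> int \<Rightarrow> real"
  assumes N: "N \<ge> 1" and L: "L \<ge> 1"
    and dx: "dx > 0" and dt: "dt > 0" and vstar: "vstar > 0"
    and rho: "rho > 0" and g1: "0 < g1" "g1 < rho" and g2: "g2 > 0"
    and chi_pos: "\<And>j. j \<in> Jset L \<Longrightarrow> chi1 j > 0 \<and> chi2 j > 0"
    and chi_sym: "\<And>j. j \<in> Jset L \<Longrightarrow> chi1 j = chi1 (1 - j) \<and> chi2 j = chi2 (1 - j)"
    and chi1_norm: "(\<Sum>j\<in>Jset L. (vstar / real L) * chi1 j) = 1"
    and chi2_norm: "(\<Sum>j\<in>Jset L. (vstar / real L) * chi2 j) = 1"
    and CFL: "dx / (2 * dt) \<ge> vstar / 2"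
    and f0b: "\<And>i j. i < N \<Longrightarrow> j \<in> Jset L \<Longrightarrow>
               (rho - g1) * chi1 j \<le> f0 i j \<and> f0 i j \<le> (rho + g2) * chi1 j"
    and g0b: "\<And>i j. i < N \<Longrightarrow> j \<in> Jset L \<Longrightarrow>
               inverse (rho + g2) * chi2 j \<le> g0 i j \<and> g0 i j \<le> inverse (rho - g1) * chi2 j"
    and schf: "\<And>i j. i < N \<Longrightarrow> j \<in> Jset L \<Longrightarrow>
       (f i j - f0 i j) / dt
       + (flux N vstar L dx dt f i j - flux N vstar L dx dt f (prv N i) j) / (dx * (vstar / real L))
       = chi1 j - rhotil vstar L (gtil rho g1 g2 chi2 g) i * ftil rho g1 g2 chi1 f i j"
    and schg: "\<And>i j. i < N \<Longrightarrow> j \<in> Jset L \<Longrightarrow>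
       (g i j - g0 i j) / dt
       + (flux N vstar L dx dt g i j - flux N vstar L dx dt g (prv N i) j) / (dx * (vstar / real L))
       = chi2 j - rhotil vstar L (ftil rho g1 g2 chi1 f) i * gtil rho g1 g2 chi2 g i j"
  shows "\<forall>i<N. \<forall>j\<in>Jset L.
           (rho - g1) * chi1 j \<le> f i j \<and> f i j \<le> (rho + g2) * chi1 j \<and>
           inverse (rho + g2) * chi2 j \<le> g i j \<and> g i j \<le> inverse (rho - g1) * chi2 j"
proof (intro allI impI ballI)
  fix i j assume i: "i < N" and j: "j \<in> Jset L"
  define dv where "dv = vstar / real L"
  have dv: "dv > 0" using vstar L unfolding dv_def by simp
  have c1: "chi1 j > 0" and c2: "chi2 j > 0" using chi_pos[OF j] by auto
  have rp: "rho - g1 > 0" "rho + g2 > 0" using g1 g2 by auto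
  have inv_le: "inverse (rho + g2) \<le> inverse (rho - g1)" using rp g2 g1
    by (simp add: le_imp_inverse_le)
  have lohi1: "\<And>j. j \<in> Jset L \<Longrightarrow> (rho - g1) * chi1 j \<le> (rho + g2) * chi1 j"
  proof -
    fix j assume "j \<in> Jset L" hence "chi1 j > 0" using chi_pos by auto
    thus "(rho - g1) * chi1 j \<le> (rho + g2) * chi1 j" using g1 g2 by (intro mult_right_mono) auto
  qed
  have lohi2: "\<And>j. j \<in> Jset L \<Longrightarrow> inverse (rho + g2) * chi2 j \<le> inverse (rho - g1) * chi2 j"
  proof -
    fix j assume "j \<in> Jset L" hence "chi2 j > 0" using chi_pos by auto
    thus "inverse (rho + g2) * chi2 j \<le> inverse (rho - g1) * chi2 j" using inv_le by (intro mult_right_mono) auto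
  qed
  let ?rg = "\<lambda>i. rhotil vstar L (gtil rho g1 g2 chi2 g) i"
  let ?rf = "\<lambda>i. rhotil vstar L (ftil rho g1 g2 chi1 f) i"
  have rg1: "\<And>i. inverse (rho + g2) \<le> ?rg i"
    by (rule rhotil_ge[OF _ vstar chi2_norm]) (simp add: gtil_def trunc_ge lohi2)
  have rg2: "\<And>i. ?rg i \<le> inverse (rho - g1)"
    by (rule rhotil_le[OF _ vstar chi2_norm]) (simp add: gtil_def trunc_le)
  have rf1: "\<And>i. rho - g1 \<le> ?rf i"
    by (rule rhotil_ge[OF _ vstar chi1_norm]) (simp add: ftil_def trunc_ge lohi1)
  have rf2: "\<And>i. ?rf i \<le> rho + g2"
    by (rule rhotil_le[OF _ vstar chi1_norm]) (simp add: ftil_def trunc_le)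
  have fU: "\<forall>i<N. f i j \<le> (rho + g2) * chi1 j"
  proof (rule upper_gen[OF N dt schf[OF _ j]])
    fix i assume "i < N" "\<forall>k<N. f k j \<le> f i j"
    thus "0 \<le> (flux N vstar L dx dt f i j - flux N vstar L dx dt f (prv N i) j) / (dx * (vstar / real L))"
      using flux_max[OF N _ L vstar j CFL] dx vstar by simp
  next
    fix i assume "i < N" thus "f0 i j \<le> (rho + g2) * chi1 j" using f0b[OF _ j] by auto
  next
    fix i assume "i < N" "(rho + g2) * chi1 j < f i j"
    hence ft: "ftil rho g1 g2 chi1 f i j = (rho + g2) * chi1 j"
      unfolding ftil_def using lohi1[OF j] by (simp add: trunc_hi)
    have "chi1 j = inverse (rho + g2) * ((rho + g2) * chi1 j)" using rp by simp
    also have "\<dots> \<le> ?rg i * ((rho + g2) * chi1 j)"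
      using rg1 rp c1 by (intro mult_right_mono) auto
    finally show "chi1 j - ?rg i * ftil rho g1 g2 chi1 f i j \<le> 0" using ft by simp
  qed
  have fL: "\<forall>i<N. (rho - g1) * chi1 j \<le> f i j"
  proof (rule lower_gen[OF N dt schf[OF _ j]])
    fix i assume "i < N" "\<forall>k<N. f i j \<le> f k j"
    hence fm: "flux N vstar L dx dt f i j - flux N vstar L dx dt f (prv N i) j \<le> 0"
      using flux_min[OF N _ L vstar j CFL] by blast
    have "dx * (vstar / real L) > 0" using dx vstar L by simp
    thus "(flux N vstar L dx dt f i j - flux N vstar L dx dt f (prv N i) j) / (dx * (vstar / real L)) \<le> 0"
      by (rule divide_nonpos_pos[OF fm])
  next
    fix i assume "i < N" thus "(rho - g1) * chi1 j \<le> f0 i j" using f0b[OF _ j] by auto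
  next
    fix i assume "i < N" "f i j < (rho - g1) * chi1 j"
    hence ft: "ftil rho g1 g2 chi1 f i j = (rho - g1) * chi1 j"
      unfolding ftil_def using lohi1[OF j] by (simp add: trunc_lo)
    have "?rg i * ((rho - g1) * chi1 j) \<le> inverse (rho - g1) * ((rho - g1) * chi1 j)"
      using rg2 rp c1 by (intro mult_right_mono) auto
    also have "\<dots> = chi1 j" using rp by simp
    finally show "0 \<le> chi1 j - ?rg i * ftil rho g1 g2 chi1 f i j" using ft by simp
  qed
  have gU: "\<forall>i<N. g i j \<le> inverse (rho - g1) * chi2 j"
  proof (rule upper_gen[OF N dt schg[OF _ j]])
    fix i assume "i < N" "\<forall>k<N. g k j \<le> g i j"
    thus "0 \<le> (flux N vstar L dx dt g i j - flux N vstar L dx dt g (prv N i) j) / (dx * (vstar / real L))"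
      using flux_max[OF N _ L vstar j CFL] dx vstar by simp
  next
    fix i assume "i < N" thus "g0 i j \<le> inverse (rho - g1) * chi2 j" using g0b[OF _ j] by auto
  next
    fix i assume "i < N" "inverse (rho - g1) * chi2 j < g i j"
    hence gt: "gtil rho g1 g2 chi2 g i j = inverse (rho - g1) * chi2 j"
      unfolding gtil_def using lohi2[OF j] by (simp add: trunc_hi)
    have "chi2 j = (rho - g1) * (inverse (rho - g1) * chi2 j)" using rp by simp
    also have "\<dots> \<le> ?rf i * (inverse (rho - g1) * chi2 j)"
      using rf1 rp c2 by (intro mult_right_mono) auto
    finally show "chi2 j - ?rf i * gtil rho g1 g2 chi2 g i j \<le> 0" using gt by simp
  qed
  have gL: "\<forall>i<N. inverse (rho + g2) * chi2 j \<le> g i j"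
  proof (rule lower_gen[OF N dt schg[OF _ j]])
    fix i assume "i < N" "\<forall>k<N. g i j \<le> g k j"
    hence fm: "flux N vstar L dx dt g i j - flux N vstar L dx dt g (prv N i) j \<le> 0"
      using flux_min[OF N _ L vstar j CFL] by blast
    have "dx * (vstar / real L) > 0" using dx vstar L by simp
    thus "(flux N vstar L dx dt g i j - flux N vstar L dx dt g (prv N i) j) / (dx * (vstar / real L)) \<le> 0"
      by (rule divide_nonpos_pos[OF fm])
  next
    fix i assume "i < N" thus "inverse (rho + g2) * chi2 j \<le> g0 i j" using g0b[OF _ j] by auto
  next
    fix i assume "i < N" "g i j < inverse (rho + g2) * chi2 j"
    hence gt: "gtil rho g1 g2 chi2 g i j = inverse (rho + g2) * chi2 j"
      unfolding gtil_def using lohi2[OF j] by (simp add: trunc_lo)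
    have "?rf i * (inverse (rho + g2) * chi2 j) \<le> (rho + g2) * (inverse (rho + g2) * chi2 j)"
      using rf2 rp c2 by (intro mult_right_mono) auto
    also have "\<dots> = chi2 j" using rp by simp
    finally show "0 \<le> chi2 j - ?rf i * gtil rho g1 g2 chi2 g i j" using gt by simp
  qed
  show "(rho - g1) * chi1 j \<le> f i j \<and> f i j \<le> (rho + g2) * chi1 j \<and>
           inverse (rho + g2) * chi2 j \<le> g i j \<and> g i j \<le> inverse (rho - g1) * chi2 j"
    using fU fL gU gL i by auto
qed

end
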